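(* For all integers $2\le n\le m$, \[ \gamma_{2t}(K_n\Box K_m)\le\gamma_{2t}(K_n\Box K_{m+1})\le\gamma_{2t}(K_n\Box K_m)+1 \] and \[ \gamma_{2t}(K_n\Box K_m)\le\gamma_{2t}(K_{n+1}\Box K_m)\le\gamma_{2t}(K_n\Box K_m)+2. \]
   Context: For a graph $G=(V,E)$, a set $S\subseteq V$ is a total $2$-dominating set if every vertex of $V$ (including those in $S$) is adjacent to at least $2$ vertices of $S$; $\gamma_{2t}(G)$ is the minimum cardinality of such a set. $G\Box H$ denotes the Cartesian product: vertex set $V(G)\times V(H)$, with $(u_1,v_1)\sim(u_2,v_2)$ iff either $u_1=u_2$ and $v_1\sim v_2$, or $v_1=v_2$ and $u_1\sim u_2$. $K_n$ is the complete graph on $n$ vertices. *)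

theory Defs
  imports Main
begin

text \<open>A graph is given by a vertex set V and a symmetric irreflexive adjacency relation E.\<close>

definition total_2_dom_set :: "'a set \<Rightarrow> ('a \<Rightarrow> 'a \<Rightarrow> bool) \<Rightarrow> 'a set \<Rightarrow> bool" where
  "total_2_dom_set V E S \<longleftrightarrow> S \<subseteq> V \<and> (\<forall>v\<in>V. 2 \<le> card {u\<in>S. E v u})"

definition gamma_2t :: "'a set \<Rightarrow> ('a \<Rightarrow> 'a \<Rightarrow> bool) \<Rightarrow> nat" where
  "gamma_2t V E = Min (card ` {S. total_2_dom_set V E S})"

definition complete_verts :: "nat \<Rightarrow> nat set" where
  "complete_verts n = {..<n}"

definition complete_adj :: "nat \<Rightarrow> nat \<Rightarrow> bool" where
  "complete_adj u v \<longleftrightarrow> u \<noteq> v"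

definition cart_adj :: "('a \<Rightarrow> 'a \<Rightarrow> bool) \<Rightarrow> ('b \<Rightarrow> 'b \<Rightarrow> bool) \<Rightarrow> 'a \<times> 'b \<Rightarrow> 'a \<times> 'b \<Rightarrow> bool" where
  "cart_adj EG EH p q \<longleftrightarrow>
     (fst p = fst q \<and> EH (snd p) (snd q)) \<or> (snd p = snd q \<and> EG (fst p) (fst q))"

definition gamma_2t_KK :: "nat \<Rightarrow> nat \<Rightarrow> nat" where
  "gamma_2t_KK n m = gamma_2t (complete_verts n \<times> complete_verts m) (cart_adj complete_adj complete_adj)"

end

theory Submission imports Defs begin

abbreviation KA :: "nat\<times>nat \<Rightarrow> nat\<times>nat \<Rightarrow> bool" where
  "KA \<equiv> cart_adj complete_adj complete_adj"

lemma adj_iff: "KA (a,b) (c,d) \<longleftrightarrow> (a = c \<and> b \<noteq> d) \<or> (b = d \<and> a \<noteq> c)"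
  by (auto simp: cart_adj_def complete_adj_def)

definition Rw :: "(nat\<times>nat) set \<Rightarrow> nat \<Rightarrow> nat set" where "Rw S i = {j. (i,j)\<in>S}"
definition Cl :: "(nat\<times>nat) set \<Rightarrow> nat \<Rightarrow> nat set" where "Cl S j = {i. (i,j)\<in>S}"

lemma fin_Rw: "finite S \<Longrightarrow> finite (Rw S i)"
proof -
  assume "finite S"
  have "Rw S i \<subseteq> snd ` S" by (force simp: Rw_def)
  thus ?thesis using \<open>finite S\<close> finite_subset by blast
qed

lemma fin_Cl: "finite S \<Longrightarrow> finite (Cl S j)"
proof -
  assume "finite S"
  have "Cl S j \<subseteq> fst ` S" by (force simp: Cl_def)
  thus ?thesis using \<open>finite S\<close> finite_subset by blast
qed

lemma nb_split:
  assumes "finite S"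
  shows "card {u\<in>S. KA (i,j) u} = card (Rw S i - {j}) + card (Cl S j - {i})"
proof -
  have eq: "{u\<in>S. KA (i,j) u} = Pair i ` (Rw S i - {j}) \<union> (\<lambda>x. (x,j)) ` (Cl S j - {i})"
    by (auto simp: adj_iff Rw_def Cl_def cart_adj_def complete_adj_def)
  have d: "Pair i ` (Rw S i - {j}) \<inter> (\<lambda>x. (x,j)) ` (Cl S j - {i}) = {}" by auto
  have "card {u\<in>S. KA (i,j) u} = card (Pair i ` (Rw S i - {j})) + card ((\<lambda>x. (x,j)) ` (Cl S j - {i}))"
    unfolding eq using d fin_Rw[OF assms] fin_Cl[OF assms] by (intro card_Un_disjoint) auto
  also have "\<dots> = card (Rw S i - {j}) + card (Cl S j - {i})"
    by (subst card_image, simp add: inj_on_def)+ simp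
  finally show ?thesis .
qed

lemma t2d_iff:
  assumes "finite P" "finite Q"
  shows "total_2_dom_set (P\<times>Q) KA S \<longleftrightarrow> S \<subseteq> P\<times>Q \<and> (\<forall>i\<in>P. \<forall>j\<in>Q. 2 \<le> card (Rw S i - {j}) + card (Cl S j - {i}))"
proof
  assume h: "total_2_dom_set (P\<times>Q) KA S"
  hence s: "S \<subseteq> P\<times>Q" by (simp add: total_2_dom_set_def)
  hence f: "finite S" using assms finite_subset by blast
  show "S \<subseteq> P\<times>Q \<and> (\<forall>i\<in>P. \<forall>j\<in>Q. 2 \<le> card (Rw S i - {j}) + card (Cl S j - {i}))"
    using h s nb_split[OF f] by (auto simp: total_2_dom_set_def)
next
  assume h: "S \<subseteq> P\<times>Q \<and> (\<forall>i\<in>P. \<forall>j\<in>Q. 2 \<le> card (Rw S i - {j}) + card (Cl S j - {i}))"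
  hence f: "finite S" using assms finite_subset by blast
  show "total_2_dom_set (P\<times>Q) KA S"
    unfolding total_2_dom_set_def using h nb_split[OF f] by auto
qed

lemma gam_le:
  assumes "total_2_dom_set ({..<p}\<times>{..<q}) KA S"
  shows "gamma_2t_KK p q \<le> card S"
proof -
  have "{S. total_2_dom_set ({..<p}\<times>{..<q}) KA S} \<subseteq> Pow ({..<p}\<times>{..<q})"
    by (auto simp: total_2_dom_set_def)
  hence "finite {S. total_2_dom_set ({..<p}\<times>{..<q}) KA S}" by (rule finite_subset) simp
  thus ?thesis unfolding gamma_2t_KK_def gamma_2t_def complete_verts_def
    using assms by (intro Min_le) auto
qed

lemma gam_ex:
  assumes "total_2_dom_set ({..<p}\<times>{..<q}) KA S0"
  shows "\<exists>S. total_2_dom_set ({..<p}\<times>{..<q}) KA S \<and> card S = gamma_2t_KK p q"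
proof -
  have "{S. total_2_dom_set ({..<p}\<times>{..<q}) KA S} \<subseteq> Pow ({..<p}\<times>{..<q})"
    by (auto simp: total_2_dom_set_def)
  hence "finite {S. total_2_dom_set ({..<p}\<times>{..<q}) KA S}" by (rule finite_subset) simp
  hence "Min (card ` {S. total_2_dom_set ({..<p}\<times>{..<q}) KA S}) \<in> card ` {S. total_2_dom_set ({..<p}\<times>{..<q}) KA S}"
    using assms by (intro Min_in) auto
  thus ?thesis unfolding gamma_2t_KK_def gamma_2t_def complete_verts_def by auto
qed

lemma iso_t2d:
  assumes "inj_on f V" "f ` V = V'" "\<forall>x\<in>V. \<forall>y\<in>V. E' (f x) (f y) = E x y"
    "total_2_dom_set V E S"
  shows "total_2_dom_set V' E' (f ` S)"
proof -
  have sV: "S \<subseteq> V" using assms(4) by (simp add: total_2_dom_set_def)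
  have "\<forall>v'\<in>V'. 2 \<le> card {u\<in>f ` S. E' v' u}"
  proof
    fix v' assume "v' \<in> V'"
    then obtain v where v: "v \<in> V" "v' = f v" using assms(2) by auto
    have eq: "{u\<in>f ` S. E' v' u} = f ` {u\<in>S. E v u}"
      using v sV assms(3) by auto
    have "card (f ` {u\<in>S. E v u}) = card {u\<in>S. E v u}"
      by (rule card_image, rule inj_on_subset[OF assms(1)]) (use sV in auto)
    moreover have "2 \<le> card {u\<in>S. E v u}" using assms(4) v by (auto simp: total_2_dom_set_def)
    ultimately show "2 \<le> card {u\<in>f ` S. E' v' u}" using eq by simp
  qed
  moreover have "f ` S \<subseteq> V'" using sV assms(2) by auto
  ultimately show ?thesis by (simp add: total_2_dom_set_def)
qed

lemma twocol:
  assumes "2 \<le> p" "2 \<le> q"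
  shows "total_2_dom_set ({..<p}\<times>{..<q}) KA ({..<p}\<times>{0,1})"
proof -
  have "2 \<le> card (Rw ({..<p}\<times>{0,1}) i - {j}) + card (Cl ({..<p}\<times>{0,1}) j - {i})"
    if "i < p" "j < q" for i j
  proof (cases "j \<le> 1")
    case True
    have "Rw ({..<p}\<times>{0,1}) i - {j} = {0,1} - {j}" using that by (auto simp: Rw_def)
    moreover have "card ({0::nat,1} - {j}) = 1" using True
      by (cases "j = 0") (auto simp: insert_Diff_if)
    moreover have "Cl ({..<p}\<times>{0,1}) j - {i} = {..<p} - {i}" using True by (auto simp: Cl_def)
    moreover have "card ({..<p} - {i}) = p - 1" using that by simp
    ultimately show ?thesis using assms by simp
  next
    case False
    have "Rw ({..<p}\<times>{0,1}) i - {j} = {0,1}" using that False by (auto simp: Rw_def)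
    thus ?thesis by simp
  qed
  moreover have "{..<p}\<times>{0,1::nat} \<subseteq> {..<p}\<times>{..<q}" using assms by auto
  ultimately show ?thesis by (subst t2d_iff) auto
qed

lemma twocol_card: "card ({..<p}\<times>{0,1::nat}) = 2*p"
  by (simp add: card_cartesian_product)

lemma transp_le:
  assumes "2 \<le> p" "2 \<le> q"
  shows "gamma_2t_KK q p \<le> gamma_2t_KK p q"
proof -
  obtain S where S: "total_2_dom_set ({..<p}\<times>{..<q}) KA S" "card S = gamma_2t_KK p q"
    using gam_ex[OF twocol[OF assms]] by blast
  have "total_2_dom_set ({..<q}\<times>{..<p}) KA (prod.swap ` S)"
    by (rule iso_t2d[OF _ _ _ S(1)]) (auto simp: adj_iff cart_adj_def complete_adj_def)
  hence "gamma_2t_KK q p \<le> card (prod.swap ` S)" by (rule gam_le)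
  also have "\<dots> = card S" by (simp add: card_image)
  finally show ?thesis using S(2) by simp
qed

lemma cnt1:
  assumes "finite S" "(i,j) \<in> S"
  shows "card (Rw S i) + card (Cl S j) \<le> card S + 1"
proof -
  let ?A = "Pair i ` Rw S i" and ?B = "(\<lambda>x. (x,j)) ` Cl S j"
  have cA: "card ?A = card (Rw S i)" by (simp add: card_image inj_on_def)
  have cB: "card ?B = card (Cl S j)" by (simp add: card_image inj_on_def)
  have I: "?A \<inter> ?B = {(i,j)}" using assms(2) by (auto simp: Rw_def Cl_def)
  have U: "?A \<union> ?B \<subseteq> S" by (auto simp: Rw_def Cl_def)
  have "card ?A + card ?B = card (?A \<union> ?B) + card (?A \<inter> ?B)"
    by (rule card_Un_Int) (use fin_Rw[OF assms(1)] fin_Cl[OF assms(1)] in auto)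
  moreover have "card (?A \<union> ?B) \<le> card S" using U assms(1) by (rule card_mono[rotated])
  ultimately show ?thesis using cA cB I by simp
qed

lemma cnt2:
  assumes "finite S" "i \<noteq> i'"
  shows "card (Rw S i) + card (Rw S i') \<le> card S"
proof -
  let ?A = "Pair i ` Rw S i" and ?B = "Pair i' ` Rw S i'"
  have cA: "card ?A = card (Rw S i)" by (simp add: card_image inj_on_def)
  have cB: "card ?B = card (Rw S i')" by (simp add: card_image inj_on_def)
  have "card (?A \<union> ?B) = card ?A + card ?B"
    by (rule card_Un_disjoint) (use fin_Rw[OF assms(1)] assms(2) in auto)
  moreover have "card (?A \<union> ?B) \<le> card S" using assms(1) by (intro card_mono) (auto simp: Rw_def)
  ultimately show ?thesis using cA cB by simp
qed

lemma cnt3: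
  assumes "finite S" "j \<noteq> j'"
  shows "card (Cl S j) + card (Cl S j') \<le> card S"
proof -
  let ?A = "(\<lambda>x. (x,j)) ` Cl S j" and ?B = "(\<lambda>x. (x,j')) ` Cl S j'"
  have cA: "card ?A = card (Cl S j)" by (simp add: card_image inj_on_def)
  have cB: "card ?B = card (Cl S j')" by (simp add: card_image inj_on_def)
  have "card (?A \<union> ?B) = card ?A + card ?B"
    by (rule card_Un_disjoint) (use fin_Cl[OF assms(1)] assms(2) in auto)
  moreover have "card (?A \<union> ?B) \<le> card S" using assms(1) by (intro card_mono) (auto simp: Cl_def)
  ultimately show ?thesis using cA cB by simp
qed

lemma lower4:
  assumes "2 \<le> p" "2 \<le> q" "total_2_dom_set ({..<p}\<times>{..<q}) KA S"
  shows "4 \<le> card S"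
proof -
  have sub: "S \<subseteq> {..<p}\<times>{..<q}" and H: "\<And>i j. i<p \<Longrightarrow> j<q \<Longrightarrow> 2 \<le> card (Rw S i - {j}) + card (Cl S j - {i})"
    using assms(3) by (auto simp: t2d_iff)
  have fS: "finite S" using sub finite_subset by blast
  have "S \<noteq> {}"
  proof
    assume "S = {}"
    thus False using H[of 0 0] assms by (simp add: Rw_def Cl_def)
  qed
  then obtain i j where ij: "(i,j) \<in> S" by auto
  hence ip: "i < p" and jq: "j < q" using sub by auto
  define r where "r = card (Rw S i)"
  define c where "c = card (Cl S j)"
  have jR: "j \<in> Rw S i" and iC: "i \<in> Cl S j" using ij by (auto simp: Rw_def Cl_def)
  have r1: "card (Rw S i - {j}) = r - 1" using jR fin_Rw[OF fS] r_def by simp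
  have c1: "card (Cl S j - {i}) = c - 1" using iC fin_Cl[OF fS] c_def by simp
  have r0: "r \<ge> 1" using jR fin_Rw[OF fS] r_def card_0_eq by fastforce
  have c0: "c \<ge> 1" using iC fin_Cl[OF fS] c_def card_0_eq by fastforce
  have h0: "2 \<le> (r - 1) + (c - 1)" using H[OF ip jq] r1 c1 by simp
  have C1: "r + c \<le> card S + 1" using cnt1[OF fS ij] r_def c_def by simp
  show ?thesis
  proof (cases "c = 1")
    case True
    define i' where "i' = (if i = 0 then 1 else 0::nat)"
    have i': "i' \<noteq> i" "i' < p" using assms(1) by (auto simp: i'_def)
    have "Cl S j = {i}" using True iC fin_Cl[OF fS] c_def by (metis card_1_singletonE singletonD)
    hence "card (Cl S j - {i'}) = 1" using i' by auto
    hence "1 \<le> card (Rw S i' - {j})" using H[OF i'(2) jq] by simp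
    hence "1 \<le> card (Rw S i')" using fin_Rw[OF fS] by (meson card_Diff1_le le_trans)
    moreover have "card (Rw S i) + card (Rw S i') \<le> card S" using cnt2[OF fS] i'(1) by metis
    ultimately show ?thesis using h0 True r_def by linarith
  next
    case cn1: False
    show ?thesis
    proof (cases "r = 1")
      case True
      define j' where "j' = (if j = 0 then 1 else 0::nat)"
      have j': "j' \<noteq> j" "j' < q" using assms(2) by (auto simp: j'_def)
      have "Rw S i = {j}" using True jR fin_Rw[OF fS] r_def by (metis card_1_singletonE singletonD)
      hence "card (Rw S i - {j'}) = 1" using j' by auto
      hence "1 \<le> card (Cl S j' - {i})" using H[OF ip j'(2)] by simp
      hence "1 \<le> card (Cl S j')" using fin_Cl[OF fS] by (meson card_Diff1_le le_trans)
      moreover have "card (Cl S j) + card (Cl S j') \<le> card S" using cnt3[OF fS] j'(1) by metis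
      ultimately show ?thesis using h0 True c_def by linarith
    next
      case rn1: False
      show ?thesis
      proof (cases "r + c \<ge> 5")
        case True thus ?thesis using C1 by linarith
      next
        case False
        hence r2: "r = 2" and "c = 2" using h0 r0 c0 cn1 rn1 by linarith+
        have "Rw S i - {j} \<noteq> {}" using r1 r2 by (metis card.empty diff_add_inverse2 nat_1_add_1 zero_neq_one)
        then obtain j1 where j1: "j1 \<in> Rw S i" "j1 \<noteq> j" by auto
        have j1q: "j1 < q" using j1 sub by (auto simp: Rw_def)
        have "card (Rw S i - {j1}) = 1" using j1 fin_Rw[OF fS] r_def r2 by simp
        hence a: "1 \<le> card (Cl S j1 - {i})" using H[OF ip j1q] by simp
        have iC1: "i \<in> Cl S j1" using j1 by (auto simp: Rw_def Cl_def)
        have "card (Cl S j1 - {i}) = card (Cl S j1) - 1" using iC1 fin_Cl[OF fS] by simp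
        hence "2 \<le> card (Cl S j1)" using a by linarith
        moreover have "card (Cl S j) + card (Cl S j1) \<le> card S" using cnt3[OF fS] j1(2) by metis
        ultimately show ?thesis using \<open>c = 2\<close> c_def by linarith
      qed
    qed
  qed
qed

lemma t2d_facts:
  assumes "total_2_dom_set ({..<p}\<times>{..<q}) KA S"
  shows "S \<subseteq> {..<p}\<times>{..<q}" "finite S"
    "\<And>i j. i<p \<Longrightarrow> j<q \<Longrightarrow> 2 \<le> card (Rw S i - {j}) + card (Cl S j - {i})"
  using assms finite_subset[of S "{..<p}\<times>{..<q}"] by (auto simp: t2d_iff)

lemma two_rows:
  assumes "2 \<le> p" "1 \<le> q" "total_2_dom_set ({..<p}\<times>{..<q}) KA S"
  shows "\<exists>r1 r2. r1 < p \<and> r2 < p \<and> r1 \<noteq> r2 \<and> Rw S r1 \<noteq> {} \<and> Rw S r2 \<noteq> {}"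
proof -
  note F = t2d_facts[OF assms(3)]
  have "S \<noteq> {}"
  proof
    assume "S = {}"
    thus False using F(3)[of 0 0] assms by (simp add: Rw_def Cl_def)
  qed
  then obtain i j where ij: "(i,j) \<in> S" by auto
  hence ip: "i < p" and jq: "j < q" using F(1) by auto
  have Ri: "Rw S i \<noteq> {}" using ij by (auto simp: Rw_def)
  show ?thesis
  proof (cases "Cl S j - {i} = {}")
    case False
    then obtain i' where "i' \<in> Cl S j" "i' \<noteq> i" by auto
    moreover hence "i' < p" "Rw S i' \<noteq> {}" using F(1) by (auto simp: Cl_def Rw_def)
    ultimately show ?thesis using ip Ri by blast
  next
    case True
    define i' where "i' = (if i = 0 then 1 else 0::nat)"
    have i': "i' \<noteq> i" "i' < p" using assms(1) by (auto simp: i'_def)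
    have "Cl S j - {i'} \<subseteq> {i}" using True by auto
    hence "card (Cl S j - {i'}) \<le> 1" by (metis card.empty card_mono finite.emptyI finite.insertI is_singletonI is_singleton_altdef)
    hence "1 \<le> card (Rw S i' - {j})" using F(3)[OF i'(2) jq] by linarith
    hence "Rw S i' \<noteq> {}" by auto
    thus ?thesis using i' ip Ri by metis
  qed
qed

lemma addcol2:
  assumes "2 \<le> p" "1 \<le> q" "total_2_dom_set ({..<p}\<times>{..<q}) KA S"
  shows "\<exists>S'. total_2_dom_set ({..<p}\<times>{..<Suc q}) KA S' \<and> card S' \<le> card S + 2"
proof -
  note F = t2d_facts[OF assms(3)]
  obtain r1 r2 where r: "r1 < p" "r2 < p" "r1 \<noteq> r2" "Rw S r1 \<noteq> {}" "Rw S r2 \<noteq> {}"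
    using two_rows[OF assms] by blast
  define S' where "S' = S \<union> {(r1,q),(r2,q)}"
  have fS': "finite S'" using F(2) S'_def by simp
  have "card S' \<le> card S + card {(r1,q),(r2,q)}" unfolding S'_def by (rule card_Un_le)
  also have "card {(r1,q),(r2,q)} \<le> 2" by (simp add: card_insert_if)
  finally have cS': "card S' \<le> card S + 2" by simp
  have sub: "S' \<subseteq> {..<p}\<times>{..<Suc q}" using F(1) r unfolding S'_def by auto
  have "2 \<le> card (Rw S' i - {j}) + card (Cl S' j - {i})" if ip: "i < p" and jq: "j < Suc q" for i j
  proof (cases "j < q")
    case True
    have "card (Rw S i - {j}) \<le> card (Rw S' i - {j})"
      by (rule card_mono) (use fin_Rw[OF fS'] in \<open>auto simp: S'_def Rw_def\<close>)
    moreover have "card (Cl S j - {i}) \<le> card (Cl S' j - {i})"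
      by (rule card_mono) (use fin_Cl[OF fS'] in \<open>auto simp: S'_def Cl_def\<close>)
    ultimately show ?thesis using F(3)[OF ip True] by linarith
  next
    case False
    hence jj: "j = q" using jq by simp
    have RR: "Rw S i \<subseteq> Rw S' i - {j}" using F(1) jj by (auto simp: S'_def Rw_def)
    have CC: "Cl S' j = {r1,r2}" using F(1) jj by (auto simp: S'_def Cl_def)
    show ?thesis
    proof (cases "i = r1 \<or> i = r2")
      case True
      have "1 \<le> card (Rw S i)" using True r fin_Rw[OF F(2)] by (metis One_nat_def Suc_leI card_gt_0_iff)
      moreover have "card (Rw S i) \<le> card (Rw S' i - {j})" using RR fin_Rw[OF fS'] by (intro card_mono) auto
      moreover have "card (Cl S' j - {i}) = 1" using CC True r(3) by auto
      ultimately show ?thesis by linarith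
    next
      case False
      hence "card (Cl S' j - {i}) = 2" using CC r(3) by auto
      thus ?thesis by linarith
    qed
  qed
  hence "total_2_dom_set ({..<p}\<times>{..<Suc q}) KA S'" using sub by (subst t2d_iff) auto
  thus ?thesis using cS' by blast
qed

lemma sum_cols:
  assumes "finite S" "\<forall>j<k. 2 \<le> card (Cl S j)"
  shows "2*k \<le> card S"
proof -
  let ?A = "\<lambda>j. (\<lambda>x. (x,j)) ` Cl S j"
  have "card (\<Union>j\<in>{..<k}. ?A j) = (\<Sum>j\<in>{..<k}. card (?A j))"
    by (rule card_UN_disjoint) (use fin_Cl[OF assms(1)] in auto)
  also have "\<dots> = (\<Sum>j\<in>{..<k}. card (Cl S j))" by (simp add: card_image inj_on_def)
  also have "\<dots> \<ge> (\<Sum>j\<in>{..<k}. 2)" using assms(2) by (intro sum_mono) auto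
  finally have "2*k \<le> card (\<Union>j\<in>{..<k}. ?A j)" by simp
  also have "\<dots> \<le> card S" using assms(1) by (intro card_mono) (auto simp: Cl_def)
  finally show ?thesis .
qed

lemma addcol1:
  assumes "2 \<le> p" "p \<le> q" "total_2_dom_set ({..<p}\<times>{..<q}) KA S"
  shows "\<exists>S'. total_2_dom_set ({..<p}\<times>{..<Suc q}) KA S' \<and> card S' \<le> card S + 1"
proof -
  note F = t2d_facts[OF assms(3)]
  show ?thesis
  proof (cases "\<exists>i<p. Rw S i = {}")
    case True
    then obtain i where i: "i < p" "Rw S i = {}" by auto
    have "\<forall>j<p. 2 \<le> card (Cl S j)"
    proof (intro allI impI)
      fix j assume "j < p"
      hence "2 \<le> card (Cl S j - {i})" using F(3)[OF i(1), of j] i(2) assms(2) by simp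
      thus "2 \<le> card (Cl S j)" using fin_Cl[OF F(2)] by (meson card_Diff1_le le_trans)
    qed
    hence "2*p \<le> card S" using sum_cols[OF F(2)] by blast
    moreover have "total_2_dom_set ({..<p}\<times>{..<Suc q}) KA ({..<p}\<times>{0,1})"
      using twocol assms by simp
    ultimately show ?thesis using twocol_card by (metis trans_le_add1)
  next
    case nE: False
    show ?thesis
    proof (cases "\<exists>r<p. 2 \<le> card (Rw S r)")
      case True
      then obtain r where r: "r < p" "2 \<le> card (Rw S r)" by auto
      define S' where "S' = insert (r,q) S"
      have fS': "finite S'" using F(2) S'_def by simp
      have cS': "card S' \<le> card S + 1" unfolding S'_def by (simp add: card_insert_if F(2))
      have sub: "S' \<subseteq> {..<p}\<times>{..<Suc q}" using F(1) r unfolding S'_def by auto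
      have "2 \<le> card (Rw S' i - {j}) + card (Cl S' j - {i})" if ip: "i < p" and jq: "j < Suc q" for i j
      proof (cases "j < q")
        case True
        have "card (Rw S i - {j}) \<le> card (Rw S' i - {j})"
          by (rule card_mono) (use fin_Rw[OF fS'] in \<open>auto simp: S'_def Rw_def\<close>)
        moreover have "card (Cl S j - {i}) \<le> card (Cl S' j - {i})"
          by (rule card_mono) (use fin_Cl[OF fS'] in \<open>auto simp: S'_def Cl_def\<close>)
        ultimately show ?thesis using F(3)[OF ip True] by linarith
      next
        case False
        hence jj: "j = q" using jq by simp
        have RR: "Rw S i \<subseteq> Rw S' i - {j}" using F(1) jj by (auto simp: S'_def Rw_def)
        hence RR': "card (Rw S i) \<le> card (Rw S' i - {j})" using fin_Rw[OF fS'] by (intro card_mono) auto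
        have CC: "Cl S' j = {r}" using F(1) jj by (auto simp: S'_def Cl_def)
        show ?thesis
        proof (cases "i = r")
          case True thus ?thesis using RR' r by simp
        next
          case False
          hence "card (Cl S' j - {i}) = 1" using CC by auto
          moreover have "1 \<le> card (Rw S i)" using nE ip fin_Rw[OF F(2)]
            by (metis One_nat_def Suc_leI card_gt_0_iff)
          ultimately show ?thesis using RR' by linarith
        qed
      qed
      hence "total_2_dom_set ({..<p}\<times>{..<Suc q}) KA S'" using sub by (subst t2d_iff) auto
      thus ?thesis using cS' by blast
    next
      case False
      have one: "\<forall>i<p. card (Rw S i) = 1"
      proof (intro allI impI)
        fix i assume "i < p"
        hence "Rw S i \<noteq> {}" "\<not> 2 \<le> card (Rw S i)" using nE False by auto
        moreover have "0 < card (Rw S i)" using \<open>Rw S i \<noteq> {}\<close> fin_Rw[OF F(2)] by (simp add: card_gt_0_iff)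
        ultimately show "card (Rw S i) = 1" by linarith
      qed
      define f where "f i = the_elem (Rw S i)" for i
      have Rf: "Rw S i = {f i}" if "i < p" for i
        proof -
        have "card (Rw S i) = 1" using one \<open>i < p\<close> by simp
        then obtain x where "Rw S i = {x}" by (rule card_1_singletonE)
        thus ?thesis unfolding f_def by simp
      qed
      have p0: "0 < p" using assms by simp
      have "card (Rw S 0 - {f 0}) = 0" using Rf[OF p0] by simp
      moreover have f0q: "f 0 < q" using Rf[OF p0] F(1) by (auto simp: Rw_def)
      ultimately have "2 \<le> card (Cl S (f 0) - {0})" using F(3)[OF p0 f0q] by simp
      hence "Cl S (f 0) - {0} \<noteq> {}" by (intro notI) simp
      then obtain i1 where i1: "i1 \<in> Cl S (f 0)" "i1 \<noteq> 0" by blast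
      have i1p: "i1 < p" using i1 F(1) by (auto simp: Cl_def)
      have "f 0 \<in> Rw S i1" using i1 by (auto simp: Cl_def Rw_def)
      hence "f i1 = f 0" using Rf[OF i1p] by simp
      hence "\<not> inj_on f {..<p}" using i1 i1p p0 inj_onD[of f "{..<p}" i1 0] by auto
      hence "card (f ` {..<p}) \<noteq> card {..<p}" using eq_card_imp_inj_on by blast
      hence "card (f ` {..<p}) < q" using card_image_le[of "{..<p}" f] assms(2) by simp
      hence "\<not> {..<q} \<subseteq> f ` {..<p}" using card_mono[of "f ` {..<p}" "{..<q}"] by auto
      then obtain j where j: "j < q" "j \<notin> f ` {..<p}" by auto
      have "Cl S j = {}"
      proof (rule ccontr)
        assume "Cl S j \<noteq> {}"
        then obtain i where "(i,j) \<in> S" by (auto simp: Cl_def)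
        moreover hence "i < p" using F(1) by auto
        ultimately show False using Rf j(2) by (auto simp: Rw_def)
      qed
      moreover have "f 0 \<noteq> j" using j p0 by auto
      hence "card (Rw S 0 - {j}) = 1" using Rf[OF p0] by simp
      ultimately show ?thesis using F(3)[OF p0 j(1)] by simp
    qed
  qed
qed

lemma delcol_gen:
  assumes "3 \<le> q" "total_2_dom_set ({..<p}\<times>{..<Suc q}) KA S"
    and a: "a < Suc q" "\<forall>j<Suc q. card (Cl S a) \<le> card (Cl S j)"
  shows "\<exists>S'. total_2_dom_set ({..<p}\<times>({..<Suc q} - {a})) KA S' \<and> card S' \<le> card S"
proof -
  note F = t2d_facts[OF assms(2)]
  define Q' where "Q' = {..<Suc q} - {a}"
  have fQ': "finite Q'" by (simp add: Q'_def)
  have cQ': "card Q' = q" using a(1) by (simp add: Q'_def)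
  define full where "full i = (\<forall>c\<in>Q'. (i,c) \<in> S)" for i
  define A where "A = {i \<in> Cl S a. \<not> full i}"
  define g where "g i = (SOME c. c \<in> Q' \<and> (i,c) \<notin> S)" for i
  have gA: "g i \<in> Q' \<and> (i, g i) \<notin> S" if "i \<in> A" for i
  proof -
    have "\<exists>c. c \<in> Q' \<and> (i,c) \<notin> S" using that by (auto simp: A_def full_def)
    thus ?thesis unfolding g_def by (rule someI_ex)
  qed
  define S0 where "S0 = {x\<in>S. snd x \<noteq> a}"
  define S1 where "S1 = S0 \<union> (\<lambda>i. (i, g i)) ` A"
  have fA: "finite A" using fin_Cl[OF F(2)] by (simp add: A_def)
  have fS0: "finite S0" using F(2) by (simp add: S0_def)
  have fS1: "finite S1" using fA fS0 by (simp add: S1_def)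
  have "card S1 \<le> card S0 + card ((\<lambda>i. (i, g i)) ` A)" unfolding S1_def by (rule card_Un_le)
  also have "\<dots> \<le> card S0 + card A" using card_image_le[OF fA] by simp
  also have "\<dots> \<le> card S0 + card (Cl S a)" using fin_Cl[OF F(2)] by (simp add: A_def card_mono)
  also have "\<dots> = card S0 + card ((\<lambda>x. (x,a)) ` Cl S a)" by (simp add: card_image inj_on_def)
  also have "\<dots> = card (S0 \<union> (\<lambda>x. (x,a)) ` Cl S a)"
    by (rule card_Un_disjoint[symmetric]) (use fS0 fin_Cl[OF F(2)] in \<open>auto simp: S0_def\<close>)
  also have "S0 \<union> (\<lambda>x. (x,a)) ` Cl S a = S" by (auto simp: S0_def Cl_def)
  finally have cS1: "card S1 \<le> card S" .
  have sub: "S1 \<subseteq> {..<p}\<times>Q'"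
  proof
    fix x assume "x \<in> S1"
    thus "x \<in> {..<p}\<times>Q'"
    proof (unfold S1_def, elim UnE)
      assume "x \<in> S0" thus ?thesis using F(1) by (auto simp: S0_def Q'_def)
    next
      assume "x \<in> (\<lambda>i. (i, g i)) ` A"
      then obtain i where "i \<in> A" "x = (i, g i)" by auto
      moreover hence "i < p" using F(1) by (auto simp: A_def Cl_def)
      ultimately show ?thesis using gA by auto
    qed
  qed
  have RS1: "Rw S i - {a} \<subseteq> Rw S1 i" for i by (auto simp: Rw_def S1_def S0_def)
  have CS1: "Cl S j \<subseteq> Cl S1 j" if "j \<noteq> a" for j using that by (auto simp: Cl_def S1_def S0_def)
  have main: "2 \<le> card (Rw S1 i - {j}) + card (Cl S1 j - {i})" if ip: "i < p" and jQ: "j \<in> Q'" for i j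
  proof -
    have ja: "j \<noteq> a" and jq: "j < Suc q" using jQ by (auto simp: Q'_def)
    have Hij: "2 \<le> card (Rw S i - {j}) + card (Cl S j - {i})" using F(3)[OF ip jq] .
    have colm: "card (Cl S j - {i}) \<le> card (Cl S1 j - {i})"
      using CS1[OF ja] fin_Cl[OF fS1] by (intro card_mono) auto
    show ?thesis
    proof (cases "i \<in> Cl S a")
      case False
      hence "Rw S i \<subseteq> Rw S1 i" using RS1[of i] by (auto simp: Rw_def Cl_def)
      hence "card (Rw S i - {j}) \<le> card (Rw S1 i - {j})" using fin_Rw[OF fS1] by (intro card_mono) auto
      thus ?thesis using Hij colm by linarith
    next
      case iC: True
      show ?thesis
      proof (cases "full i")
        case True
        hence "Q' \<subseteq> Rw S1 i" by (auto simp: full_def Rw_def S1_def S0_def Q'_def)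
        hence "card (Q' - {j}) \<le> card (Rw S1 i - {j})" using fin_Rw[OF fS1] by (intro card_mono) auto
        moreover have "card (Q' - {j}) = q - 1" using jQ fQ' cQ' by simp
        ultimately show ?thesis using assms(1) by linarith
      next
        case False
        hence iA: "i \<in> A" using iC by (simp add: A_def)
        note gi = gA[OF iA]
        have gR: "g i \<in> Rw S1 i" using iA by (auto simp: Rw_def S1_def)
        have gnR: "g i \<notin> Rw S i" using gi by (auto simp: Rw_def)
        have aR: "a \<in> Rw S i" using iC by (auto simp: Rw_def Cl_def)
        show ?thesis
        proof (cases "j = g i")
          case False
          have "insert (g i) (Rw S i - {j} - {a}) \<subseteq> Rw S1 i - {j}" using RS1[of i] gR False by auto
          hence "card (insert (g i) (Rw S i - {j} - {a})) \<le> card (Rw S1 i - {j})"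
            using fin_Rw[OF fS1] by (intro card_mono) auto
          moreover have "card (insert (g i) (Rw S i - {j} - {a})) = card (Rw S i - {j} - {a}) + 1"
            using gnR fin_Rw[OF F(2)] by simp
          moreover have aRj: "a \<in> Rw S i - {j}" using aR ja by auto
          moreover have "card (Rw S i - {j} - {a}) = card (Rw S i - {j}) - 1"
            using aRj by (simp add: card_Diff_singleton)
          moreover have "card (Rw S i - {j}) > 0" using aRj fin_Rw[OF F(2)] by (auto simp: card_gt_0_iff)
          ultimately show ?thesis using Hij colm by linarith
        next
          case True
          have "Rw S i - {a} \<subseteq> Rw S1 i - {j}" using RS1[of i] gnR True by auto
          hence r: "card (Rw S i - {a}) \<le> card (Rw S1 i - {j})" using fin_Rw[OF fS1] by (intro card_mono) auto
          have iCj: "i \<notin> Cl S j" using gi True by (auto simp: Cl_def)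
          have "Cl S j \<subseteq> Cl S1 j - {i}" using CS1[OF ja] iCj by auto
          hence "card (Cl S j) \<le> card (Cl S1 j - {i})" using fin_Cl[OF fS1] by (intro card_mono) auto
          moreover have "card (Cl S a) \<le> card (Cl S j)" using a(2) jq by simp
          moreover have "card (Cl S a - {i}) \<le> card (Cl S a)" using fin_Cl[OF F(2)] by (simp add: card_Diff1_le)
          moreover have "2 \<le> card (Rw S i - {a}) + card (Cl S a - {i})" using F(3)[OF ip a(1)] .
          ultimately show ?thesis using r by linarith
        qed
      qed
    qed
  qed
  have "total_2_dom_set ({..<p}\<times>Q') KA S1" using sub main by (subst t2d_iff) (auto simp: fQ')
  thus ?thesis using cS1 Q'_def by blast
qed

lemma delcol:
  assumes "3 \<le> q" "total_2_dom_set ({..<p}\<times>{..<Suc q}) KA S"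
  shows "\<exists>S'. total_2_dom_set ({..<p}\<times>{..<q}) KA S' \<and> card S' \<le> card S"
proof -
  obtain a where a: "a < Suc q" "\<forall>j. j < Suc q \<longrightarrow> card (Cl S a) \<le> card (Cl S j)"
    using ex_has_least_nat[of "\<lambda>j. j < Suc q" 0 "\<lambda>j. card (Cl S j)"] by auto
  obtain S1 where S1: "total_2_dom_set ({..<p}\<times>({..<Suc q} - {a})) KA S1" "card S1 \<le> card S"
    using delcol_gen[OF assms a(1)] a(2) by blast
  define h where "h j = (if j = q then a else j)" for j
  define f where "f = map_prod (id::nat\<Rightarrow>nat) h"
  have hinj: "inj_on h ({..<Suc q} - {a})" by (auto simp: inj_on_def h_def)
  have himg: "h ` ({..<Suc q} - {a}) = {..<q}"
  proof
    show "h ` ({..<Suc q} - {a}) \<subseteq> {..<q}" using a(1) by (auto simp: h_def)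
  next
    show "{..<q} \<subseteq> h ` ({..<Suc q} - {a})"
    proof
      fix k assume k: "k \<in> {..<q}"
      show "k \<in> h ` ({..<Suc q} - {a})"
      proof (cases "k = a")
        case True
        hence "h q = k" "q \<in> {..<Suc q} - {a}" using k by (auto simp: h_def)
        thus ?thesis by (metis imageI)
      next
        case False
        hence "h k = k" "k \<in> {..<Suc q} - {a}" using k by (auto simp: h_def)
        thus ?thesis by (metis imageI)
      qed
    qed
  qed
  have "total_2_dom_set ({..<p}\<times>{..<q}) KA (f ` S1)"
  proof (rule iso_t2d[OF _ _ _ S1(1)])
    show "inj_on f ({..<p} \<times> ({..<Suc q} - {a}))"
      unfolding f_def by (rule map_prod_inj_on[OF inj_on_id hinj])
    show "f ` ({..<p} \<times> ({..<Suc q} - {a})) = {..<p} \<times> {..<q}"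
      unfolding f_def by (rule map_prod_surj_on[OF _ himg]) simp
    show "\<forall>x\<in>{..<p} \<times> ({..<Suc q} - {a}). \<forall>y\<in>{..<p} \<times> ({..<Suc q} - {a}). KA (f x) (f y) = KA x y"
    proof (intro ballI)
      fix x y assume x: "x \<in> {..<p} \<times> ({..<Suc q} - {a})" and y: "y \<in> {..<p} \<times> ({..<Suc q} - {a})"
      have "h (snd x) = h (snd y) \<longleftrightarrow> snd x = snd y"
      proof
        assume "h (snd x) = h (snd y)"
        moreover have "snd x \<in> {..<Suc q} - {a}" "snd y \<in> {..<Suc q} - {a}" using x y by auto
        ultimately show "snd x = snd y" using inj_onD[OF hinj] by blast
      qed simp
      thus "KA (f x) (f y) = KA x y" by (simp add: f_def cart_adj_def complete_adj_def)
    qed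
  qed
  moreover have "S1 \<subseteq> {..<p}\<times>({..<Suc q} - {a})" using S1(1) by (simp add: total_2_dom_set_def)
  hence "finite S1" by (rule finite_subset) simp
  hence "card (f ` S1) \<le> card S" using card_image_le[of S1 f] S1(2) by linarith
  ultimately show ?thesis by blast
qed

lemma G_ex:
  assumes "2 \<le> p" "2 \<le> q"
  shows "\<exists>S. total_2_dom_set ({..<p}\<times>{..<q}) KA S \<and> card S = gamma_2t_KK p q"
  using gam_ex[OF twocol[OF assms]] .

lemma mono_col:
  assumes "2 \<le> p" "3 \<le> q"
  shows "gamma_2t_KK p q \<le> gamma_2t_KK p (Suc q)"
proof -
  obtain S where S: "total_2_dom_set ({..<p}\<times>{..<Suc q}) KA S" "card S = gamma_2t_KK p (Suc q)"
    using G_ex[of p "Suc q"] assms by auto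
  obtain S' where "total_2_dom_set ({..<p}\<times>{..<q}) KA S'" "card S' \<le> card S"
    using delcol[OF assms(2) S(1)] by blast
  thus ?thesis using gam_le S(2) by (metis le_trans)
qed

lemma add1:
  assumes "2 \<le> p" "p \<le> q"
  shows "gamma_2t_KK p (Suc q) \<le> gamma_2t_KK p q + 1"
proof -
  obtain S where S: "total_2_dom_set ({..<p}\<times>{..<q}) KA S" "card S = gamma_2t_KK p q"
    using G_ex[of p q] assms by auto
  obtain S' where "total_2_dom_set ({..<p}\<times>{..<Suc q}) KA S'" "card S' \<le> card S + 1"
    using addcol1[OF assms S(1)] by blast
  thus ?thesis using gam_le S(2) by (metis le_trans)
qed

lemma add2:
  assumes "2 \<le> p" "2 \<le> q"
  shows "gamma_2t_KK p (Suc q) \<le> gamma_2t_KK p q + 2"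
proof -
  obtain S where S: "total_2_dom_set ({..<p}\<times>{..<q}) KA S" "card S = gamma_2t_KK p q"
    using G_ex[of p q] assms by auto
  obtain S' where "total_2_dom_set ({..<p}\<times>{..<Suc q}) KA S'" "card S' \<le> card S + 2"
    using addcol2[OF assms(1) _ S(1)] assms by auto
  thus ?thesis using gam_le S(2) by (metis le_trans)
qed

lemma ge4:
  assumes "2 \<le> p" "2 \<le> q"
  shows "4 \<le> gamma_2t_KK p q"
  using G_ex[OF assms] lower4[OF assms] by metis

lemma le4:
  assumes "2 \<le> q"
  shows "gamma_2t_KK 2 q \<le> 4"
  using gam_le[OF twocol[of 2 q]] assms twocol_card[of 2] by simp

theorem lemma5:
  fixes n m :: nat
  assumes "2 \<le> n" and "n \<le> m"
  shows "gamma_2t_KK n m \<le> gamma_2t_KK n (m + 1) \<and> gamma_2t_KK n (m + 1) \<le> gamma_2t_KK n m + 1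
       \<and> gamma_2t_KK n m \<le> gamma_2t_KK (n + 1) m \<and> gamma_2t_KK (n + 1) m \<le> gamma_2t_KK n m + 2"
proof (intro conjI)
  show "gamma_2t_KK n m \<le> gamma_2t_KK n (m + 1)"
  proof (cases "3 \<le> m")
    case True thus ?thesis using mono_col[OF assms(1)] by simp
  next
    case False
    hence "n = 2" "m = 2" using assms by auto
    thus ?thesis using le4[of 2] ge4[of 2 3] by simp
  qed
  show "gamma_2t_KK n (m + 1) \<le> gamma_2t_KK n m + 1" using add1[OF assms] by simp
  show "gamma_2t_KK n m \<le> gamma_2t_KK (n + 1) m"
  proof (cases "3 \<le> n")
    case True
    have "gamma_2t_KK n m \<le> gamma_2t_KK m n" using transp_le[of m n] assms by simp
    also have "\<dots> \<le> gamma_2t_KK m (Suc n)" using mono_col[of m n] True assms by simp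
    also have "\<dots> \<le> gamma_2t_KK (Suc n) m" using transp_le[of "Suc n" m] assms by simp
    finally show ?thesis by simp
  next
    case False
    hence "n = 2" using assms by auto
    thus ?thesis using le4[of m] ge4[of 3 m] assms by simp
  qed
  show "gamma_2t_KK (n + 1) m \<le> gamma_2t_KK n m + 2"
  proof -
    have "gamma_2t_KK (Suc n) m \<le> gamma_2t_KK m (Suc n)" using transp_le[of m "Suc n"] assms by simp
    also have "\<dots> \<le> gamma_2t_KK m n + 2" using add2[of m n] assms by simp
    also have "\<dots> \<le> gamma_2t_KK n m + 2" using transp_le[of n m] assms by simp
    finally show ?thesis by simp
  qed
qed

end
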